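(* Let $X,Y$ be Banach spaces, let $F:X\rightrightarrows Y$ be a closed convex set-valued mapping, let $A\subset X$ be a closed convex set, let $\bar y\in Y$, put $S:=F^{-1}(\bar y)\cap A$, and let $\bar x\in S$. Let $\eta\in(0,+\infty)$ be such that $$DF^{-1}(\bar y,\bar x)(\eta_1B_Y)\cap(T(A,\bar x)+\eta_2B_X)\subset B_X\quad\text{for all }\eta_1,\eta_2\ge0\text{ with }\eta_1+\eta_2<\eta.$$ Then $S=\{\bar x\}$.
   Context: $B_X,B_Y$ are the closed unit balls. $F$ closed convex means ${\rm gph}(F)=\{(x,y):y\in F(x)\}$ is closed and convex in $X\times Y$. For a closed convex set $C$ and $a\in C$, the contingent cone $T(C,a)$ is the set of $v$ for which there exist $v_n\to v$, $t_n\to0^+$ with $a+t_nv_n\in C$ for all $n$. For $(x,y)\in{\rm gph}(F)$, $DF^{-1}(y,x)(v):=\{u\in X:(u,v)\in T({\rm gph}(F),(x,y))\}$ and $DF^{-1}(y,x)(W)=\bigcup_{v\in W}DF^{-1}(y,x)(v)$ for $W\subset Y$. *)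

theory Defs
  imports "HOL-Analysis.Analysis"
begin

text \<open>A set-valued map F from X to Y is represented by its graph gph F, a subset of X times Y.\<close>

definition contingent_cone :: "'a::real_normed_vector set \<Rightarrow> 'a \<Rightarrow> 'a set" where
  "contingent_cone C a = {v. \<exists>vs ts. (vs \<longlonglongrightarrow> v) \<and> (ts \<longlonglongrightarrow> 0) \<and>
       (\<forall>n. ts n > (0::real)) \<and> (\<forall>n. a + ts n *\<^sub>R vs n \<in> C)}"

definition graph_deriv_inv ::
  "('a::real_normed_vector \<times> 'b::real_normed_vector) set \<Rightarrow> 'b \<Rightarrow> 'a \<Rightarrow> 'b \<Rightarrow> 'a set" where
  "graph_deriv_inv G y x v = {u. (u, v) \<in> contingent_cone G (x, y)}"

definition graph_deriv_inv_set ::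
  "('a::real_normed_vector \<times> 'b::real_normed_vector) set \<Rightarrow> 'b \<Rightarrow> 'a \<Rightarrow> 'b set \<Rightarrow> 'a set" where
  "graph_deriv_inv_set G y x W = (\<Union>v\<in>W. graph_deriv_inv G y x v)"

end

theory Submission
  imports Defs
begin

lemma cone_mem:
  fixes C :: "'a::real_normed_vector set"
  assumes "convex C" "a \<in> C" "a + w \<in> C" "c > 0"
  shows "c *\<^sub>R w \<in> contingent_cone C a"
proof -
  define ts where "ts = (\<lambda>n::nat. (1/c) * inverse (real (Suc n)))"
  have t0: "ts \<longlonglongrightarrow> 0"
    unfolding ts_def by (intro tendsto_mult_right_zero LIMSEQ_inverse_real_of_nat)
  have pos: "\<forall>n. ts n > 0" unfolding ts_def using assms(4) by auto
  have mem: "a + ts n *\<^sub>R (c *\<^sub>R w) \<in> C" for n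
  proof -
    define s where "s = 1 / (real n + 1)"
    have s: "0 \<le> s" "s \<le> 1" unfolding s_def by auto
    have "ts n * c = s" unfolding ts_def s_def using assms(4) by (simp add: field_simps) (smt (verit) mult_nonneg_nonneg of_nat_0_le_iff)
    hence "a + ts n *\<^sub>R (c *\<^sub>R w) = (1 - s) *\<^sub>R a + s *\<^sub>R (a + w)"
      by (simp add: algebra_simps)
    also have "\<dots> \<in> C" using assms(1-3) s by (simp add: convexD_alt)
    finally show ?thesis .
  qed
  show ?thesis unfolding contingent_cone_def
    using t0 pos mem by (intro CollectI exI[of _ "\<lambda>n. c *\<^sub>R w"] exI[of _ ts]) auto
qed

theorem proposition3p1:
  fixes G :: "('a::banach \<times> 'b::banach) set"
    and A :: "'a set" and ybar :: 'b and xbar :: 'a and \<eta> :: real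
  assumes "closed G" and "convex G"
    and "closed A" and "convex A"
    and "xbar \<in> {x. (x, ybar) \<in> G} \<inter> A"
    and "\<eta> > 0"
    and "\<And>\<eta>1 \<eta>2. \<eta>1 \<ge> 0 \<Longrightarrow> \<eta>2 \<ge> 0 \<Longrightarrow> \<eta>1 + \<eta>2 < \<eta> \<Longrightarrow>
           graph_deriv_inv_set G ybar xbar (cball 0 \<eta>1) \<inter>
             {t + b | t b. t \<in> contingent_cone A xbar \<and> b \<in> cball 0 \<eta>2}
           \<subseteq> cball 0 1"
  shows "{x. (x, ybar) \<in> G} \<inter> A = {xbar}"
proof (rule ccontr)
  assume "\<not> ?thesis"
  then obtain x where x: "(x, ybar) \<in> G" "x \<in> A" "x \<noteq> xbar" using assms(5) by blast
  define u where "u = x - xbar"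
  have un: "norm u > 0" using x(3) unfolding u_def by auto
  define c where "c = 2 / norm u"
  have c: "c > 0" using un unfolding c_def by auto
  have g: "c *\<^sub>R (u, 0::'b) \<in> contingent_cone G (xbar, ybar)"
    using cone_mem[OF assms(2), of "(xbar, ybar)" "(u, 0)" c] assms(5) x c
    unfolding u_def by auto
  have a: "c *\<^sub>R u \<in> contingent_cone A xbar"
    using cone_mem[OF assms(4), of xbar u c] assms(5) x c unfolding u_def by auto
  have "c *\<^sub>R u \<in> graph_deriv_inv_set G ybar xbar (cball 0 0)"
    using g unfolding graph_deriv_inv_set_def graph_deriv_inv_def by auto
  moreover have "c *\<^sub>R u \<in> {t + b | t b. t \<in> contingent_cone A xbar \<and> b \<in> cball 0 0}"
    using a by (intro CollectI exI[of _ "c *\<^sub>R u"] exI[of _ 0]) auto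
  moreover have "graph_deriv_inv_set G ybar xbar (cball 0 0) \<inter>
             {t + b | t b. t \<in> contingent_cone A xbar \<and> b \<in> cball 0 (0::real)} \<subseteq> cball 0 1"
    using assms(7)[of 0 0] assms(6) by simp
  ultimately have "c *\<^sub>R u \<in> cball 0 1" by blast
  moreover have "norm (c *\<^sub>R u) = 2" using un c unfolding c_def by simp
  ultimately show False by simp
qed

end
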